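(* Let $F\in\mathfrak{E}$ have degree $j$ with homogeneous decomposition $F=f_j+f_{j-1}+\cdots+f_{j-a}+\cdots$, where $f_i\in\mathfrak{D}$ for $j\ge i>j-a$ and $f_{j-a}\in\mathfrak{E}$. Let $A=S/\operatorname{Ann}_S F$, and suppose that $H_A(a)_1=H_A(a)_{j-a-1}\neq 0$ and that $H_A(a)_u=0$ for some $u\in[2,j-a-2]$. Then $f_{j-a}$ is linear in $Z_1,\ldots,Z_s$ (every monomial of $f_{j-a}$ has degree at most one in $Z_1,\ldots,Z_s$).
   Context: Let $\mathsf{k}$ be a field, $R=\mathsf{k}\{x_1,\ldots,x_r\}$, $S=\mathsf{k}\{x_1,\ldots,x_r,z_1,\ldots,z_s\}$, $\mathfrak{D}=\mathsf{k}_{DP}[X_1,\ldots,X_r]\subset\mathfrak{E}=\mathsf{k}_{DP}[X_1,\ldots,X_r,Z_1,\ldots,Z_s]$ divided power algebras with $S$ acting on $\mathfrak{E}$ by contraction ($x^{\alpha}\circ X^{[\beta]}=X^{[\beta-\alpha]}$ if $\beta\ge\alpha$ componentwise, $0$ otherwise). For $F\in\mathfrak{E}$ of degree $j$, $A=S/\operatorname{Ann}_S F$ is Artinian Gorenstein of socle degree $j$ with maximal ideal $\mathfrak{m}_A$; $C_A(a)$ is the ideal of $A^*=\bigoplus_i\mathfrak{m}_A^i/\mathfrak{m}_A^{i+1}$ whose degree-$i$ part is the image of $\mathfrak{m}_A^i\cap(0:\mathfrak{m}_A^{\,j+1-a-i})$, $Q_A(a)=C_A(a)/C_A(a+1)$,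 and $H_A(a)_i=\dim_{\mathsf{k}}Q_A(a)_i$. *)

theory Defs
  imports "HOL-Library.Poly_Mapping"
begin

text \<open>Variables are indexed by natural numbers: x_1..x_r are indices 0..r-1,
 z_1..z_s are indices r..r+s-1.  Exponent vectors are finitely supported maps
 nat to nat.  An element of the divided power algebra is a finitely supported
 coefficient map: lookup F b is the coefficient of X^[b].  A power series in
 the first n variables is a coefficient function vanishing on monomials that
 involve other variables.\<close>

definition mdeg :: "(nat \<Rightarrow>\<^sub>0 nat) \<Rightarrow> nat" where
  "mdeg b = (\<Sum>i\<in>Poly_Mapping.keys b. Poly_Mapping.lookup b i)"

definition dp_deg :: "((nat \<Rightarrow>\<^sub>0 nat) \<Rightarrow>\<^sub>0 'k::zero) \<Rightarrow> nat" where
  "dp_deg F = Max (mdeg ` Poly_Mapping.keys F)"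

definition PS :: "nat \<Rightarrow> ((nat \<Rightarrow>\<^sub>0 nat) \<Rightarrow> 'k::field) set" where
  "PS n = {g. \<forall>b. \<not> Poly_Mapping.keys b \<subseteq> {..<n} \<longrightarrow> g b = 0}"

definition ps_add :: "((nat \<Rightarrow>\<^sub>0 nat) \<Rightarrow> 'k::field) \<Rightarrow> ((nat \<Rightarrow>\<^sub>0 nat) \<Rightarrow> 'k) \<Rightarrow> ((nat \<Rightarrow>\<^sub>0 nat) \<Rightarrow> 'k)" where
  "ps_add g h = (\<lambda>c. g c + h c)"

definition ps_mult :: "((nat \<Rightarrow>\<^sub>0 nat) \<Rightarrow> 'k::field) \<Rightarrow> ((nat \<Rightarrow>\<^sub>0 nat) \<Rightarrow> 'k) \<Rightarrow> ((nat \<Rightarrow>\<^sub>0 nat) \<Rightarrow> 'k)" where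
  "ps_mult g h = (\<lambda>c. \<Sum>(a, b)\<in>{(a, b). a + b = c}. g a * h b)"

text \<open>contraction action: x^a o X^[b] = X^[b-a] if a <= b, else 0;
  the result is returned as its coefficient function\<close>
definition contract :: "((nat \<Rightarrow>\<^sub>0 nat) \<Rightarrow> 'k::field) \<Rightarrow> ((nat \<Rightarrow>\<^sub>0 nat) \<Rightarrow>\<^sub>0 'k) \<Rightarrow> ((nat \<Rightarrow>\<^sub>0 nat) \<Rightarrow> 'k)" where
  "contract g F = (\<lambda>c. \<Sum>a\<in>{a. Poly_Mapping.lookup F (a + c) \<noteq> 0}. g a * Poly_Mapping.lookup F (a + c))"

definition Ann :: "nat \<Rightarrow> ((nat \<Rightarrow>\<^sub>0 nat) \<Rightarrow>\<^sub>0 'k::field) \<Rightarrow> ((nat \<Rightarrow>\<^sub>0 nat) \<Rightarrow> 'k) set" where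
  "Ann n F = {g \<in> PS n. contract g F = (\<lambda>_. 0)}"

text \<open>m^i in the power series ring = series of order at least i\<close>
definition mpow :: "nat \<Rightarrow> nat \<Rightarrow> ((nat \<Rightarrow>\<^sub>0 nat) \<Rightarrow> 'k::field) set" where
  "mpow n i = {g \<in> PS n. \<forall>b. mdeg b < i \<longrightarrow> g b = 0}"

definition set_add :: "((nat \<Rightarrow>\<^sub>0 nat) \<Rightarrow> 'k::field) set \<Rightarrow> ((nat \<Rightarrow>\<^sub>0 nat) \<Rightarrow> 'k) set \<Rightarrow> ((nat \<Rightarrow>\<^sub>0 nat) \<Rightarrow> 'k) set" where
  "set_add U V = {ps_add u v | u v. u \<in> U \<and> v \<in> V}"

text \<open>preimage in S of m_A^i, where A = S / Ann F\<close>
definition pre_mA :: "nat \<Rightarrow> ((nat \<Rightarrow>\<^sub>0 nat) \<Rightarrow>\<^sub>0 'k::field) \<Rightarrow> nat \<Rightarrow> ((nat \<Rightarrow>\<^sub>0 nat) \<Rightarrow> 'k) set" where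
  "pre_mA n F i = set_add (mpow n i) (Ann n F)"

text \<open>preimage in S of (0 : m_A^k)\<close>
definition pre_colon :: "nat \<Rightarrow> ((nat \<Rightarrow>\<^sub>0 nat) \<Rightarrow>\<^sub>0 'k::field) \<Rightarrow> nat \<Rightarrow> ((nat \<Rightarrow>\<^sub>0 nat) \<Rightarrow> 'k) set" where
  "pre_colon n F k = {g \<in> PS n. \<forall>h\<in>pre_mA n F k. ps_mult g h \<in> Ann n F}"

text \<open>dimension of the quotient space U/W (W a subspace of U): the maximal size
 of a finite subset of U that is linearly independent modulo W\<close>
definition qdim :: "('v \<Rightarrow> 'k::field) set \<Rightarrow> ('v \<Rightarrow> 'k) set \<Rightarrow> nat" where
  "qdim U W = Sup {card B | B. finite B \<and> B \<subseteq> U \<and>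
      (\<forall>c. (\<lambda>x. \<Sum>b\<in>B. c b * b x) \<in> W \<longrightarrow> (\<forall>b\<in>B. c b = 0))}"

text \<open>preimage in S of m_A^i \<inter> (0 : m_A^(j+1-a-i)), j the socle degree\<close>
definition preC :: "nat \<Rightarrow> ((nat \<Rightarrow>\<^sub>0 nat) \<Rightarrow>\<^sub>0 'k::field) \<Rightarrow> nat \<Rightarrow> nat \<Rightarrow> ((nat \<Rightarrow>\<^sub>0 nat) \<Rightarrow> 'k) set" where
  "preC n F a i = pre_mA n F i \<inter> pre_colon n F (dp_deg F + 1 - a - i)"

text \<open>H_A(a)_i = dim Q_A(a)_i = dim C_A(a)_i / C_A(a+1)_i; via
  m_A^i/m_A^(i+1) = (m^i + Ann)/(m^(i+1) + Ann), C_A(a)_i corresponds to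
  preC a i + pre_mA (i+1), so Q_A(a)_i = (preC a i + N)/(preC (a+1) i + N).\<close>
definition HA :: "nat \<Rightarrow> ((nat \<Rightarrow>\<^sub>0 nat) \<Rightarrow>\<^sub>0 'k::field) \<Rightarrow> nat \<Rightarrow> nat \<Rightarrow> nat" where
  "HA n F a i = qdim (set_add (preC n F a i) (pre_mA n F (Suc i)))
                     (set_add (preC n F (Suc a) i) (pre_mA n F (Suc i)))"

end

theory Submission imports Defs "HOL-Library.Function_Algebras" "HOL-Library.FuncSet" "HOL.Vector_Spaces"
begin

lemma mdeg_superset:
  assumes "finite K" "Poly_Mapping.keys b \<subseteq> K"
  shows "mdeg b = (\<Sum>i\<in>K. Poly_Mapping.lookup b i)"
  unfolding mdeg_def using assms
  by (intro sum.mono_neutral_left) (auto simp: in_keys_iff)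

lemma mdeg_add: "mdeg (x + y) = mdeg x + mdeg y"
proof -
  let ?K = "Poly_Mapping.keys x \<union> Poly_Mapping.keys y"
  have "Poly_Mapping.keys (x+y) \<subseteq> ?K" by (rule keys_add)
  then have "mdeg (x+y) = (\<Sum>i\<in>?K. Poly_Mapping.lookup (x+y) i)"
    by (intro mdeg_superset) auto
  also have "\<dots> = (\<Sum>i\<in>?K. Poly_Mapping.lookup x i) + (\<Sum>i\<in>?K. Poly_Mapping.lookup y i)"
    by (simp add: lookup_add sum.distrib)
  also have "\<dots> = mdeg x + mdeg y"
    by (subst (1 2) mdeg_superset[of ?K]) auto
  finally show ?thesis .
qed

lemma mdeg_single1: "mdeg (Poly_Mapping.single i (1::nat)) = 1"
  unfolding mdeg_def by simp

lemma lookup_le_mdeg: "Poly_Mapping.lookup b i \<le> mdeg b"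
proof (cases "i \<in> Poly_Mapping.keys b")
  case True
  then show ?thesis unfolding mdeg_def
    by (intro member_le_sum) auto
next
  case False
  then show ?thesis by (simp add: in_keys_iff)
qed

lemma finite_bounded_pm:
  assumes "finite K"
  shows "finite {x::(nat \<Rightarrow>\<^sub>0 nat). Poly_Mapping.keys x \<subseteq> K \<and> (\<forall>i. Poly_Mapping.lookup x i \<le> N)}"
    (is "finite ?X")
proof -
  let ?f = "\<lambda>x::nat \<Rightarrow>\<^sub>0 nat. restrict (Poly_Mapping.lookup x) K"
  have "inj_on ?f ?X"
  proof (rule inj_onI)
    fix x y assume x: "x \<in> ?X" and y: "y \<in> ?X" and e: "?f x = ?f y"
    show "x = y"
    proof (rule poly_mapping_eqI)
      fix i show "Poly_Mapping.lookup x i = Poly_Mapping.lookup y i"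
      proof (cases "i \<in> K")
        case True then show ?thesis using e by (metis restrict_apply)
      next
        case False
        then have "i \<notin> Poly_Mapping.keys x" "i \<notin> Poly_Mapping.keys y" using x y by auto
        then show ?thesis by (simp add: in_keys_iff)
      qed
    qed
  qed
  moreover have "?f ` ?X \<subseteq> PiE K (\<lambda>_. {..N})" by auto
  moreover have "finite (PiE K (\<lambda>_. {..N}))" using assms by (intro finite_PiE) auto
  ultimately show ?thesis by (meson finite_imageD finite_subset)
qed

lemma finite_decomp: "finite {(a, b). a + b = (c::nat \<Rightarrow>\<^sub>0 nat)}"
proof -
  let ?X = "{x::(nat \<Rightarrow>\<^sub>0 nat). Poly_Mapping.keys x \<subseteq> Poly_Mapping.keys c \<and> (\<forall>i. Poly_Mapping.lookup x i \<le> mdeg c)}"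
  have "{(a, b). a + b = c} \<subseteq> ?X \<times> ?X"
  proof
    fix p assume "p \<in> {(a, b). a + b = c}"
    then obtain a b where p: "p = (a, b)" and "c = a + b" by auto
    then show "p \<in> ?X \<times> ?X"
      using lookup_le_mdeg[of c] by (auto simp: in_keys_iff lookup_add intro: le_trans[OF le_add1] le_trans[OF le_add2])
  qed
  then show ?thesis using finite_bounded_pm[of "Poly_Mapping.keys c" "mdeg c"]
    by (meson finite_SigmaI finite_keys finite_subset)
qed

lemma finite_nz: "finite {a. Poly_Mapping.lookup (F::(nat \<Rightarrow>\<^sub>0 nat) \<Rightarrow>\<^sub>0 'k::zero) (a + c) \<noteq> 0}"
proof -
  have "{a. Poly_Mapping.lookup F (a + c) \<noteq> 0} = (\<lambda>a. a + c) -` Poly_Mapping.keys F"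
    by (auto simp: in_keys_iff)
  moreover have "inj (\<lambda>a::nat \<Rightarrow>\<^sub>0 nat. a + c)" by (auto intro: injI)
  ultimately show ?thesis by (simp add: finite_vimageI)
qed


definition dlt :: "(nat \<Rightarrow>\<^sub>0 nat) \<Rightarrow> (nat \<Rightarrow>\<^sub>0 nat) \<Rightarrow> 'k::field" where
  "dlt \<beta> = (\<lambda>c. if c = \<beta> then 1 else 0)"

lemma ps_mult_dlt_hit: "ps_mult (dlt \<beta>) h (\<beta> + e) = h e"
proof -
  have "ps_mult (dlt \<beta>) h (\<beta> + e) = (\<Sum>p\<in>{(a, b). a + b = \<beta> + e}. (if p = (\<beta>, e) then h e else 0))"
    unfolding ps_mult_def
  proof (intro sum.cong refl)
    fix p assume "p \<in> {(a, b). a + b = \<beta> + e}"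
    then obtain a b where p: "p = (a, b)" "a + b = \<beta> + e" by auto
    show "(case p of (a, b) \<Rightarrow> dlt \<beta> a * h b) = (if p = (\<beta>, e) then h e else 0)"
      using p by (auto simp: dlt_def)
  qed
  also have "\<dots> = h e" using finite_decomp[of "\<beta> + e"] by (simp add: sum.delta')
  finally show ?thesis .
qed

lemma ps_mult_dlt_miss: "\<not> (\<exists>e. y = \<beta> + e) \<Longrightarrow> ps_mult (dlt \<beta>) h y = 0"
  unfolding ps_mult_def by (intro sum.neutral) (auto simp: dlt_def)

lemma ps_mult_comm: "ps_mult g h = ps_mult h g"
  unfolding ps_mult_def
  by (rule ext, rule sum.reindex_bij_witness[where i=prod.swap and j=prod.swap])
     (auto simp: add.commute)

lemma contract_add: "contract (ps_add f g) F x = contract f F x + contract g F x"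
  unfolding contract_def ps_add_def by (simp add: sum.distrib algebra_simps)

lemma contract_scale: "contract (\<lambda>y. k * f y) F x = k * contract f F x"
  unfolding contract_def by (simp add: sum_distrib_left algebra_simps)

lemma contract_dlt_mult:
  "contract (ps_mult (dlt \<beta>) h) F c = contract h F (\<beta> + c)"
proof -
  let ?A = "{a. Poly_Mapping.lookup F (a + c) \<noteq> 0}"
  let ?E = "{e. Poly_Mapping.lookup F (e + (\<beta> + c)) \<noteq> 0}"
  have finA: "finite ?A" by (rule finite_nz)
  have sub: "(\<lambda>e. \<beta> + e) ` ?E \<subseteq> ?A" by (auto simp: ac_simps)
  have "contract (ps_mult (dlt \<beta>) h) F c
      = (\<Sum>a\<in>?A. ps_mult (dlt \<beta>) h a * Poly_Mapping.lookup F (a + c))"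
    unfolding contract_def ..
  also have "\<dots> = (\<Sum>a\<in>(\<lambda>e. \<beta> + e) ` ?E. ps_mult (dlt \<beta>) h a * Poly_Mapping.lookup F (a + c))"
  proof (rule sum.mono_neutral_right[OF finA sub], rule ballI)
    fix a assume a: "a \<in> ?A - (\<lambda>e. \<beta> + e) ` ?E"
    show "ps_mult (dlt \<beta>) h a * Poly_Mapping.lookup F (a + c) = 0"
    proof (cases "\<exists>e. a = \<beta> + e")
      case True
      then obtain e where "a = \<beta> + e" by auto
      with a show ?thesis by (auto simp: ac_simps)
    next
      case False then show ?thesis by (simp add: ps_mult_dlt_miss)
    qed
  qed
  also have "\<dots> = (\<Sum>e\<in>?E. ps_mult (dlt \<beta>) h (\<beta> + e) * Poly_Mapping.lookup F (\<beta> + e + c))"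
    by (subst sum.reindex) (auto intro: inj_onI)
  also have "\<dots> = contract h F (\<beta> + c)"
    unfolding contract_def by (intro sum.cong refl) (metis ps_mult_dlt_hit add.commute add.assoc)
  finally show ?thesis .
qed

lemma contract_dlt: 
  assumes "Poly_Mapping.lookup F (\<beta> + \<gamma>) \<noteq> 0"
  shows "contract (dlt \<beta>) F \<gamma> = Poly_Mapping.lookup F (\<beta> + \<gamma>)"
proof -
  have "contract (dlt \<beta>) F \<gamma> = (\<Sum>a\<in>{a. Poly_Mapping.lookup F (a + \<gamma>) \<noteq> 0}.
          (if a = \<beta> then Poly_Mapping.lookup F (\<beta> + \<gamma>) else 0))"
    unfolding contract_def by (intro sum.cong) (auto simp: dlt_def)
  also have "\<dots> = Poly_Mapping.lookup F (\<beta> + \<gamma>)"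
    using finite_nz[of F \<gamma>] assms by (simp add: sum.delta')
  finally show ?thesis .
qed


lemma Ann_contract: "h \<in> Ann n F \<Longrightarrow> contract h F x = 0"
  unfolding Ann_def by (auto dest: fun_cong)

lemma contract_mpow_zero:
  assumes inD: "\<forall>b\<in>Poly_Mapping.keys F. J < mdeg b \<longrightarrow> Poly_Mapping.keys b \<subseteq> {..<r}"
    and rz: "r \<le> z" and xz: "0 < Poly_Mapping.lookup x z"
    and h: "h \<in> mpow n k" and lt: "J < k + mdeg x"
  shows "contract h F x = 0"
  unfolding contract_def
proof (intro sum.neutral ballI)
  fix e assume e: "e \<in> {a. Poly_Mapping.lookup F (a + x) \<noteq> 0}"
  show "h e * Poly_Mapping.lookup F (e + x) = 0"
  proof (cases "mdeg e < k")
    case True then show ?thesis using h by (simp add: mpow_def)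
  next
    case False
    then have "J < mdeg (e + x)" using lt by (simp add: mdeg_add)
    moreover have "e + x \<in> Poly_Mapping.keys F" using e by (simp add: in_keys_iff)
    ultimately have "Poly_Mapping.keys (e + x) \<subseteq> {..<r}" using inD by blast
    moreover have "z \<in> Poly_Mapping.keys (e + x)" using xz by (simp add: in_keys_iff lookup_add)
    ultimately show ?thesis using rz by auto
  qed
qed

lemma pre_mA_split:
  "h \<in> pre_mA n F k \<Longrightarrow> \<exists>h1 h2. h = ps_add h1 h2 \<and> h1 \<in> mpow n k \<and> h2 \<in> Ann n F"
  unfolding pre_mA_def set_add_def by auto

lemma contract_pre_mA_zero:
  assumes inD: "\<forall>b\<in>Poly_Mapping.keys F. J < mdeg b \<longrightarrow> Poly_Mapping.keys b \<subseteq> {..<r}"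
    and rz: "r \<le> z" and xz: "0 < Poly_Mapping.lookup x z"
    and h: "h \<in> pre_mA n F k" and lt: "J < k + mdeg x"
  shows "contract h F x = 0"
proof -
  obtain h1 h2 where "h = ps_add h1 h2" "h1 \<in> mpow n k" "h2 \<in> Ann n F"
    using pre_mA_split[OF h] by blast
  then show ?thesis
    using contract_mpow_zero[OF inD rz xz _ lt] Ann_contract by (simp add: contract_add)
qed

lemma contract_zero_fun: "contract (\<lambda>_. 0) F x = 0"
  unfolding contract_def by simp

lemma zero_PS: "(\<lambda>_. 0) \<in> PS n" unfolding PS_def by simp
lemma zero_Ann: "(\<lambda>_. 0) \<in> Ann n F" unfolding Ann_def by (simp add: zero_PS contract_zero_fun fun_eq_iff)
lemma zero_mpow: "(\<lambda>_. 0) \<in> mpow n k" unfolding mpow_def by (simp add: zero_PS)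
lemma ps_add_zero: "ps_add f (\<lambda>_. 0) = f" unfolding ps_add_def by simp
lemma ps_add_zero2: "ps_add (\<lambda>_. 0) f = f" unfolding ps_add_def by simp
lemma ps_mult_zero: "ps_mult (\<lambda>_. 0) h = (\<lambda>_. 0)" unfolding ps_mult_def by simp

lemma set_addI: "u \<in> U \<Longrightarrow> v \<in> V \<Longrightarrow> ps_add u v \<in> set_add U V"
  unfolding set_add_def by blast

lemma mpow_pre_mA: "f \<in> mpow n k \<Longrightarrow> f \<in> pre_mA n F k"
  unfolding pre_mA_def using set_addI[OF _ zero_Ann, of f "mpow n k" n F] by (simp only: ps_add_zero)

lemma zero_pre_mA: "(\<lambda>_. 0) \<in> pre_mA n F k"
  by (rule mpow_pre_mA[OF zero_mpow])

lemma zero_pre_colon: "(\<lambda>_. 0) \<in> pre_colon n F k"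
  unfolding pre_colon_def by (simp add: zero_PS ps_mult_zero zero_Ann)

lemma ps_add_PS: "f \<in> PS n \<Longrightarrow> g \<in> PS n \<Longrightarrow> ps_add f g \<in> PS n"
  unfolding PS_def ps_add_def by simp

lemma pre_mA_PS: "h \<in> pre_mA n F k \<Longrightarrow> h \<in> PS n"
  using pre_mA_split[of h n F k] ps_add_PS unfolding mpow_def Ann_def by blast

lemma preC_PS: "h \<in> preC n F a i \<Longrightarrow> h \<in> PS n"
  unfolding preC_def using pre_mA_PS by blast

lemma keys_add_nat: "Poly_Mapping.keys (x + y) = Poly_Mapping.keys x \<union> Poly_Mapping.keys (y::nat \<Rightarrow>\<^sub>0 nat)"
  by (auto simp: in_keys_iff lookup_add)

lemma ps_mult_dlt_PS:
  assumes b: "Poly_Mapping.keys \<beta> \<subseteq> {..<n}" and h: "h \<in> PS n"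
  shows "ps_mult (dlt \<beta>) h \<in> PS n"
  unfolding PS_def
proof (intro CollectI allI impI)
  fix y :: "nat \<Rightarrow>\<^sub>0 nat" assume y: "\<not> Poly_Mapping.keys y \<subseteq> {..<n}"
  show "ps_mult (dlt \<beta>) h y = 0"
  proof (cases "\<exists>e. y = \<beta> + e")
    case True
    then obtain e where e: "y = \<beta> + e" by auto
    then have "\<not> Poly_Mapping.keys e \<subseteq> {..<n}" using y b by (auto simp: keys_add_nat)
    then show ?thesis using h e by (simp add: ps_mult_dlt_hit PS_def)
  next
    case False then show ?thesis by (simp add: ps_mult_dlt_miss)
  qed
qed


lemma sum_fun_apply: "(\<Sum>v\<in>S. f v) x = (\<Sum>v\<in>S. f v x)" for f :: "'a \<Rightarrow> 'v \<Rightarrow> 'k::comm_monoid_add"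
  by (induction S rule: infinite_finite_induct) auto


lemma card_bound:
  fixes U W :: "('v \<Rightarrow> 'k::field) set" and M :: "'v set"
  assumes finM: "finite M"
    and vanish: "\<And>B c. finite B \<Longrightarrow> B \<subseteq> U \<Longrightarrow> (\<forall>x\<in>M. (\<Sum>b\<in>B. c b * b x) = 0)
                   \<Longrightarrow> (\<lambda>x. \<Sum>b\<in>B. c b * b x) \<in> W"
    and finB: "finite B" and BU: "B \<subseteq> U"
    and indep: "\<forall>c. (\<lambda>x. \<Sum>b\<in>B. c b * b x) \<in> W \<longrightarrow> (\<forall>b\<in>B. c b = 0)"
  shows "card B \<le> card M"
proof -
  interpret VS: vector_space "\<lambda>(c::'k) (f::'v \<Rightarrow> 'k) x. c * f x"
    by unfold_locales (auto simp: fun_eq_iff algebra_simps)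
  define T where "T = (\<lambda>(f::'v \<Rightarrow> 'k) x. if x \<in> M then f x else 0)"
  define dl where "dl = (\<lambda>m (x::'v). if x = m then (1::'k) else 0)"
  have injT: "inj_on T B"
  proof (rule inj_onI, rule ccontr)
    fix b1 b2 assume b1: "b1 \<in> B" and b2: "b2 \<in> B" and e: "T b1 = T b2" and ne: "b1 \<noteq> b2"
    define c where "c = (\<lambda>b. if b = b1 then (1::'k) else if b = b2 then -1 else 0)"
    have s: "(\<Sum>b\<in>B. c b * b x) = b1 x - b2 x" for x
    proof -
      have "(\<Sum>b\<in>B. c b * b x) = (\<Sum>b\<in>B. (if b = b1 then b1 x else 0) + (if b = b2 then - b2 x else 0))"
        by (intro sum.cong) (auto simp: c_def ne)
      also have "\<dots> = b1 x - b2 x" using finB b1 b2 by (simp add: sum.distrib sum.delta')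
      finally show ?thesis .
    qed
    have "\<forall>x\<in>M. (\<Sum>b\<in>B. c b * b x) = 0"
    proof
      fix x assume x: "x \<in> M"
      have "T b1 x = T b2 x" using e by simp
      then have "b1 x = b2 x" using x by (simp add: T_def)
      then show "(\<Sum>b\<in>B. c b * b x) = 0" by (simp add: s)
    qed
    then have "(\<lambda>x. \<Sum>b\<in>B. c b * b x) \<in> W" using vanish finB BU by blast
    then have "c b1 = 0" using indep b1 by blast
    then show False by (simp add: c_def)
  qed
  have indT: "VS.independent (T ` B)"
    unfolding VS.independent_explicit_finite_subsets
  proof (intro allI impI ballI)
    fix S u v assume S: "S \<subseteq> T ` B" and finS: "finite S"
      and z: "(\<Sum>v\<in>S. (\<lambda>x. u v * v x)) = 0" and v: "v \<in> S"
    define B' where "B' = {b\<in>B. T b \<in> S}"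
    have B'B: "B' \<subseteq> B" unfolding B'_def by auto
    have imB': "T ` B' = S" using S unfolding B'_def by auto
    have injB': "inj_on T B'" using injT B'B inj_on_subset by blast
    define c where "c = (\<lambda>b. if b \<in> B' then u (T b) else 0)"
    have "\<forall>x\<in>M. (\<Sum>b\<in>B. c b * b x) = 0"
    proof
      fix x assume x: "x \<in> M"
      have "(\<Sum>b\<in>B. c b * b x) = (\<Sum>b\<in>B'. c b * b x)"
        by (rule sum.mono_neutral_right[OF finB B'B]) (auto simp: c_def)
      also have "\<dots> = (\<Sum>b\<in>B'. u (T b) * b x)" by (rule sum.cong) (auto simp: c_def)
      also have "\<dots> = (\<Sum>b\<in>B'. u (T b) * T b x)" using x by (simp add: T_def)
      also have "\<dots> = (\<Sum>v\<in>S. u v * v x)"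
        using sum.reindex[OF injB', of "\<lambda>v. u v * v x"] imB' by simp
      also have "\<dots> = (\<Sum>v\<in>S. (\<lambda>x. u v * v x)) x" by (simp add: sum_fun_apply)
      also have "\<dots> = 0" using z by simp
      finally show "(\<Sum>b\<in>B. c b * b x) = 0" .
    qed
    then have "(\<lambda>x. \<Sum>b\<in>B. c b * b x) \<in> W" using vanish finB BU by blast
    then have cz: "\<forall>b\<in>B. c b = 0" using indep by blast
    obtain b where "b \<in> B'" "v = T b" using v imB' by blast
    moreover have "c b = u (T b)" using \<open>b \<in> B'\<close> by (simp add: c_def)
    ultimately show "u v = 0" using cz B'B by auto
  qed
  have spT: "T ` B \<subseteq> VS.span (dl ` M)"
  proof
    fix t assume "t \<in> T ` B"
    then obtain b where t: "t = T b" by auto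
    have "T b = (\<Sum>m\<in>M. (\<lambda>x. b m * dl m x))"
      by (rule ext) (simp add: sum_fun_apply T_def dl_def finM if_distrib sum.delta cong: if_cong)
    also have "\<dots> \<in> VS.span (dl ` M)"
      by (intro VS.span_sum VS.span_scale VS.span_base) auto
    finally show "t \<in> VS.span (dl ` M)" using t by simp
  qed
  have "card (T ` B) \<le> card (dl ` M)"
    using VS.independent_span_bound[OF _ indT spT] finM by simp
  also have "\<dots> \<le> card M" using finM by (rule card_image_le)
  finally show ?thesis using card_image[OF injT] by simp
qed


lemma split1:
  assumes "0 < Poly_Mapping.lookup x i"
  shows "x = Poly_Mapping.single i 1 + (x - Poly_Mapping.single i (1::nat))"
  by (rule poly_mapping_eqI) (use assms in \<open>auto simp: lookup_add lookup_minus lookup_single when_def\<close>)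

lemma exists_pos:
  assumes "0 < (\<Sum>i\<in>S. Poly_Mapping.lookup (x::nat \<Rightarrow>\<^sub>0 nat) i)"
  shows "\<exists>i\<in>S. 0 < Poly_Mapping.lookup x i"
proof (rule ccontr)
  assume "\<not> ?thesis"
  then have "\<forall>i\<in>S. Poly_Mapping.lookup x i = 0" by auto
  then have "(\<Sum>i\<in>S. Poly_Mapping.lookup x i) = 0" by simp
  with assms show False by simp
qed

lemma sum_single_add:
  assumes "finite S" "k \<in> S"
  shows "(\<Sum>i\<in>S. Poly_Mapping.lookup (Poly_Mapping.single k 1 + y) i)
       = 1 + (\<Sum>i\<in>S. Poly_Mapping.lookup (y::nat \<Rightarrow>\<^sub>0 nat) i)"
proof -
  have "(\<Sum>i\<in>S. Poly_Mapping.lookup (Poly_Mapping.single k 1) i) = (\<Sum>i\<in>S. if k = i then (1::nat) else 0)"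
    by (intro sum.cong) (auto simp: lookup_single when_def)
  also have "\<dots> = 1" using assms by simp
  finally show ?thesis by (simp add: lookup_add sum.distrib)
qed

lemma mdeg_zero: "mdeg 0 = 0" unfolding mdeg_def by simp

lemma mdeg_pos: "0 < mdeg x \<Longrightarrow> \<exists>i. 0 < Poly_Mapping.lookup x i"
proof (rule ccontr)
  assume a: "0 < mdeg x" "\<not> (\<exists>i. 0 < Poly_Mapping.lookup x i)"
  then have "\<forall>i. Poly_Mapping.lookup x i = 0" by auto
  then have "mdeg x = 0" unfolding mdeg_def by simp
  with a show False by simp
qed

lemma sub_deg: "m \<le> mdeg c \<Longrightarrow> \<exists>\<beta> d. c = \<beta> + d \<and> mdeg \<beta> = m"
proof (induction m)
  case 0
  then show ?case by (intro exI[of _ 0] exI[of _ c]) (simp add: mdeg_zero)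
next
  case (Suc m)
  then obtain \<beta> d where bd: "c = \<beta> + d" "mdeg \<beta> = m" by auto
  then have "0 < mdeg d" using Suc.prems by (simp add: mdeg_add)
  then obtain i where "0 < Poly_Mapping.lookup d i" using mdeg_pos by blast
  then have "d = Poly_Mapping.single i 1 + (d - Poly_Mapping.single i 1)" by (rule split1)
  then have "c = (\<beta> + Poly_Mapping.single i 1) + (d - Poly_Mapping.single i 1)"
    using bd by (metis add.assoc)
  moreover have "mdeg (\<beta> + Poly_Mapping.single i 1) = Suc m" using bd by (simp only: mdeg_add mdeg_single1)
  ultimately show ?case by blast
qed


theorem lemma1p40:
  fixes F :: "(nat \<Rightarrow>\<^sub>0 nat) \<Rightarrow>\<^sub>0 'k::field"
    and r s j a u :: nat
  assumes inE: "\<forall>b\<in>Poly_Mapping.keys F. Poly_Mapping.keys b \<subseteq> {..<r + s}"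
    and nz: "F \<noteq> 0"
    and deg: "dp_deg F = j"
    and inD: "\<forall>b\<in>Poly_Mapping.keys F. j - a < mdeg b \<longrightarrow> Poly_Mapping.keys b \<subseteq> {..<r}"
    and H1: "HA (r + s) F a 1 = HA (r + s) F a (j - a - 1)"
    and H1nz: "HA (r + s) F a 1 \<noteq> 0"
    and u: "2 \<le> u" "u \<le> j - a - 2"
    and Hu: "HA (r + s) F a u = 0"
  shows "\<forall>b\<in>Poly_Mapping.keys F. mdeg b = j - a \<longrightarrow> (\<Sum>i\<in>{r..<r + s}. Poly_Mapping.lookup b i) \<le> 1"
proof (rule ccontr)
  assume "\<not> ?thesis"
  then obtain b0 where b0F: "b0 \<in> Poly_Mapping.keys F" and b0deg: "mdeg b0 = j - a"
    and b0z: "2 \<le> (\<Sum>i\<in>{r..<r + s}. Poly_Mapping.lookup b0 i)" by force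
  define n where "n = r + s"
  have ja: "a + 4 \<le> j" using u by linarith
  have "0 < (\<Sum>i\<in>{r..<r + s}. Poly_Mapping.lookup b0 i)" using b0z by linarith
  then obtain k where k: "k \<in> {r..<r + s}" "0 < Poly_Mapping.lookup b0 k" using exists_pos by blast
  define b1 where "b1 = b0 - Poly_Mapping.single k 1"
  have b01: "b0 = Poly_Mapping.single k 1 + b1" unfolding b1_def using k(2) by (rule split1)
  have "(\<Sum>i\<in>{r..<r + s}. Poly_Mapping.lookup b0 i) = 1 + (\<Sum>i\<in>{r..<r + s}. Poly_Mapping.lookup b1 i)"
    unfolding b01 by (rule sum_single_add) (use k(1) in auto)
  then have "2 \<le> 1 + (\<Sum>i\<in>{r..<r + s}. Poly_Mapping.lookup b1 i)" using b0z by linarith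
  then have "0 < (\<Sum>i\<in>{r..<r + s}. Poly_Mapping.lookup b1 i)" by linarith
  then obtain l where l: "l \<in> {r..<r + s}" "0 < Poly_Mapping.lookup b1 l" using exists_pos by blast
  define c where "c = b1 - Poly_Mapping.single l 1"
  have b1c: "b1 = Poly_Mapping.single l 1 + c" unfolding c_def using l(2) by (rule split1)
  have cdeg: "mdeg c = j - a - 2"
  proof -
    have "mdeg b0 = 1 + (1 + mdeg c)" unfolding b01 b1c by (simp only: mdeg_add mdeg_single1)
    then show ?thesis using b0deg by linarith
  qed
  have "u - 1 \<le> mdeg c" using cdeg u by linarith
  then obtain \<beta>' d where cd: "c = \<beta>' + d" and b'deg: "mdeg \<beta>' = u - 1" using sub_deg by blast
  define \<beta> where "\<beta> = Poly_Mapping.single k 1 + \<beta>'"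
  define \<gamma> where "\<gamma> = Poly_Mapping.single l 1 + d"
  have b0bg: "b0 = \<beta> + \<gamma>" unfolding \<beta>_def \<gamma>_def b01 b1c cd by (simp add: ac_simps)
  have bdeg: "mdeg \<beta> = u"
  proof -
    have "mdeg \<beta> = 1 + mdeg \<beta>'" unfolding \<beta>_def by (simp only: mdeg_add mdeg_single1)
    then show ?thesis using b'deg u by linarith
  qed
  have gdeg: "mdeg \<gamma> = j - a - u"
  proof -
    have "mdeg b0 = mdeg \<beta> + mdeg \<gamma>" unfolding b0bg by (simp only: mdeg_add)
    then show ?thesis using b0deg bdeg by linarith
  qed
  have bk: "0 < Poly_Mapping.lookup \<beta> k" unfolding \<beta>_def by (simp add: lookup_add)
  have gl: "0 < Poly_Mapping.lookup \<gamma> l" unfolding \<gamma>_def by (simp add: lookup_add)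
  have rk: "r \<le> k" "r \<le> l" using k l by auto
  have keysb0: "Poly_Mapping.keys b0 \<subseteq> {..<n}" using inE b0F n_def by blast
  have keysb: "Poly_Mapping.keys \<beta> \<subseteq> {..<n}" "Poly_Mapping.keys \<gamma> \<subseteq> {..<n}"
    using keysb0 unfolding b0bg by (auto simp: keys_add_nat)
  have Fb0: "Poly_Mapping.lookup F b0 \<noteq> 0" using b0F by (simp add: in_keys_iff)
  define g :: "(nat \<Rightarrow>\<^sub>0 nat) \<Rightarrow> 'k" where "g = dlt \<beta>"
  define U where "U = set_add (preC n F a u) (pre_mA n F (Suc u))"
  define W where "W = set_add (preC n F (Suc a) u) (pre_mA n F (Suc u))"
  have HAu: "HA n F a u = qdim U W" unfolding HA_def U_def W_def ..
  have dltPS: "dlt x \<in> PS n" if "Poly_Mapping.keys x \<subseteq> {..<n}" for x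
    unfolding PS_def dlt_def using that by auto
  have dltmpow: "dlt x \<in> mpow n (mdeg x)" if "Poly_Mapping.keys x \<subseteq> {..<n}" for x
    unfolding mpow_def using dltPS[OF that] by (auto simp: dlt_def)
  have g_mA: "g \<in> pre_mA n F u"
    unfolding g_def using mpow_pre_mA[OF dltmpow[OF keysb(1)]] bdeg by simp
  have g_col: "g \<in> pre_colon n F (dp_deg F + 1 - a - u)"
    unfolding pre_colon_def
  proof (intro CollectI conjI ballI)
    show "g \<in> PS n" unfolding g_def by (rule dltPS[OF keysb(1)])
    fix h assume h: "h \<in> pre_mA n F (dp_deg F + 1 - a - u)"
    show "ps_mult g h \<in> Ann n F"
      unfolding Ann_def
    proof (intro CollectI conjI)
      show "ps_mult g h \<in> PS n" unfolding g_def
        by (rule ps_mult_dlt_PS[OF keysb(1) pre_mA_PS[OF h]])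
      show "contract (ps_mult g h) F = (\<lambda>_. 0)"
      proof
        fix x
        have "0 < Poly_Mapping.lookup (\<beta> + x) k" using bk by (simp add: lookup_add)
        moreover have "j - a < (dp_deg F + 1 - a - u) + mdeg (\<beta> + x)"
          using deg bdeg ja u by (simp add: mdeg_add)
        ultimately have "contract h F (\<beta> + x) = 0"
          using contract_pre_mA_zero[OF inD rk(1) _ h] by blast
        then show "contract (ps_mult g h) F x = 0" unfolding g_def by (simp add: contract_dlt_mult)
      qed
    qed
  qed
  have gU: "g \<in> U"
  proof -
    have "g \<in> preC n F a u" unfolding preC_def using g_mA g_col by blast
    then have "ps_add g (\<lambda>_. 0) \<in> U" unfolding U_def by (rule set_addI[OF _ zero_pre_mA])
    then show ?thesis by (simp only: ps_add_zero)
  qed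
  have Lw: "contract w F \<gamma> = 0" if w: "w \<in> W" for w
  proof -
    obtain p q where wpq: "w = ps_add p q" and p: "p \<in> preC n F (Suc a) u" and q: "q \<in> pre_mA n F (Suc u)"
      using w unfolding W_def set_add_def by blast
    have "j - a < Suc u + mdeg \<gamma>" using gdeg u by linarith
    then have q0: "contract q F \<gamma> = 0" using contract_pre_mA_zero[OF inD rk(2) gl q] by blast
    have pcol: "p \<in> pre_colon n F (j - a - u)" using p deg unfolding preC_def
      by (simp add: diff_diff_left)
    have "dlt \<gamma> \<in> pre_mA n F (j - a - u)" using mpow_pre_mA[OF dltmpow[OF keysb(2)]] gdeg by simp
    then have "ps_mult p (dlt \<gamma>) \<in> Ann n F" using pcol unfolding pre_colon_def by blast
    then have "contract (ps_mult (dlt \<gamma>) p) F 0 = 0" by (simp add: ps_mult_comm Ann_contract)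
    then have p0: "contract p F \<gamma> = 0" by (simp add: contract_dlt_mult)
    show ?thesis using p0 q0 wpq by (simp add: contract_add)
  qed
  have ind: "\<forall>cc. (\<lambda>x. \<Sum>b\<in>{g}. cc b * b x) \<in> W \<longrightarrow> (\<forall>b\<in>{g}. cc b = 0)"
  proof (intro allI impI ballI)
    fix cc b assume inW: "(\<lambda>x. \<Sum>b\<in>{g}. cc b * b x) \<in> W" and b: "b \<in> {g}"
    have "contract (\<lambda>x. cc g * g x) F \<gamma> = 0" using Lw[OF inW] by simp
    then have "cc g * Poly_Mapping.lookup F b0 = 0"
      using contract_dlt[of F \<beta> \<gamma>] Fb0 unfolding g_def b0bg by (simp add: contract_scale)
    then show "cc b = 0" using Fb0 b by simp
  qed
  define M where "M = {y. Poly_Mapping.keys y \<subseteq> {..<n} \<and> mdeg y \<le> u}"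
  have finM: "finite M"
    by (rule finite_subset[OF _ finite_bounded_pm[of "{..<n}" u]])
       (auto simp: M_def intro: le_trans[OF lookup_le_mdeg])
  have UPS: "U \<subseteq> PS n"
    unfolding U_def set_add_def using preC_PS pre_mA_PS ps_add_PS by blast
  have vanish: "(\<lambda>x. \<Sum>b\<in>B. cc b * b x) \<in> W"
    if B: "finite B" "B \<subseteq> U" and z: "\<forall>x\<in>M. (\<Sum>b\<in>B. cc b * b x) = 0" for B cc
  proof -
    define f where "f = (\<lambda>x. \<Sum>b\<in>B. cc b * b x)"
    have fPS: "f \<in> PS n" unfolding PS_def f_def
    proof (intro CollectI allI impI)
      fix y :: "nat \<Rightarrow>\<^sub>0 nat" assume y: "\<not> Poly_Mapping.keys y \<subseteq> {..<n}"
      have "\<forall>b\<in>B. b y = 0" using B UPS y unfolding PS_def by blast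
      then show "(\<Sum>b\<in>B. cc b * b y) = 0" by (intro sum.neutral) simp
    qed
    have "f \<in> mpow n (Suc u)" unfolding mpow_def
    proof (intro CollectI conjI allI impI)
      show "f \<in> PS n" by (rule fPS)
      fix y :: "nat \<Rightarrow>\<^sub>0 nat" assume y: "mdeg y < Suc u"
      show "f y = 0"
      proof (cases "Poly_Mapping.keys y \<subseteq> {..<n}")
        case True then have "y \<in> M" using y by (simp add: M_def)
        then show ?thesis using z by (simp add: f_def)
      next
        case False then show ?thesis using fPS by (simp add: PS_def)
      qed
    qed
    then have "f \<in> pre_mA n F (Suc u)" by (rule mpow_pre_mA)
    moreover have "(\<lambda>_. 0) \<in> preC n F (Suc a) u" unfolding preC_def using zero_pre_mA zero_pre_colon by blast
    ultimately have "ps_add (\<lambda>_. 0) f \<in> W" unfolding W_def using set_addI by blast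
    then show ?thesis by (simp only: ps_add_zero2 f_def)
  qed
  define SS where "SS = {card B | B. finite B \<and> B \<subseteq> U \<and>
      (\<forall>c. (\<lambda>x. \<Sum>b\<in>B. c b * b x) \<in> W \<longrightarrow> (\<forall>b\<in>B. c b = 0))}"
  have qd: "qdim U W = Sup SS" unfolding qdim_def SS_def ..
  have bdd: "bdd_above SS"
  proof (rule bdd_aboveI)
    fix x assume "x \<in> SS"
    then obtain B where x: "x = card B" and B: "finite B" "B \<subseteq> U"
      and ind': "\<forall>c. (\<lambda>x. \<Sum>b\<in>B. c b * b x) \<in> W \<longrightarrow> (\<forall>b\<in>B. c b = 0)"
      unfolding SS_def by blast
    show "x \<le> card M" unfolding x by (rule card_bound[OF finM vanish B ind']) auto
  qed
  have "1 \<in> SS" unfolding SS_def using gU ind by (intro CollectI exI[of _ "{g}"]) auto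
  then have "1 \<le> Sup SS" using bdd by (rule cSup_upper)
  then show False using Hu HAu qd n_def by simp
qed

end
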